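(* The matrix $L_n$ satisfies $L_n\ge0$ entrywise and $L_n^\top\varphi_n<\varphi_n$ entrywise; consequently its spectral radius is $<1$, $\mathrm I_n-L_n$ is a nonsingular $M$-matrix and $(\mathrm I_n-L_n)^{-1}\ge0$ entrywise. Set $u_n=(\mathrm I_n-L_n)^{-1}V_n$, $v_n=(\mathrm I_n-L_n)^{-1}U_n$ and $\vartheta_n^\star=-\frac{\mathbf 1_n^\top v_n}{\mathbf 1_n^\top u_n}$ (with $\mathbf 1_n^\top u_n\neq0$). Then the unique maximiser $(\bar z_n^Q,\bar z_n^S)$ of $g$ on $\mathfrak F_n$ is given by $$\bar z_n^S=u_n\vartheta_n^\star+v_n,\qquad \bar z_n^{Q,i,j}=p_{i,j}\Big(n\bar\mu_{j,n}+\frac1{c_i}\mathbf 1_{\{i=j\}}-\frac{\gamma_i\sigma}{\sqrt n}\bar z_n^{S,i}\rho_j\nu_j\Big),$$ where $\bar\mu_{j,n}=\frac{1}{n\Theta_{j,n}}\Big(1-\zeta_j-\frac{\sigma}{\sqrt n}a_j\bar z_n^{S,j}\Big)$.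
   Context: Fix $n\ge1$, $\sigma>0$, and for each $i$: $c_i>0$, $\gamma_i>0$, $\nu_i>0$, $\rho_i\in(-1,1)$; $\rho=(\rho_i)$. Variables $z^Q=(z^{Q,i,j})\in\mathbb{R}^{n\times n}$ ($i$ row, $j$ column), $z^S\in\mathbb{R}^n$. Define $$g(z^Q,z^S)=-\frac1n\sum_{i=1}^n\Big(\frac{(z^{Q,i,i})^2}{2c_i}+\frac{\gamma_i}{2}\sum_{j=1}^n\nu_j^2(z^{Q,i,j})^2+\frac{\gamma_i\sigma^2}{2}(z^{S,i})^2+\frac{\gamma_i\sigma}{\sqrt n}z^{S,i}\sum_{j=1}^n\rho_j\nu_jz^{Q,i,j}\Big)+\frac1n\sum_{i=1}^n\frac{z^{Q,i,i}}{c_i},$$ and $\mathfrak F_n=\{(z^Q,z^S):\sum_{i=1}^nz^{Q,i,j}=1\ \forall j,\ \sum_{k=1}^nz^{S,k}=0\}$. Define $p_{i,j}=\frac{1}{\gamma_i\nu_j^2}$ for $j\ne i$ and $p_{i,i}=\frac{1}{\gamma_i\nu_i^2+1/c_i}$; for each $j$: $\Theta_{j,n}=\sum_{i=1}^np_{i,j}$, $\zeta_j=p_{j,j}/c_j\in(0,1)$, $a_j=\rho_j\zeta_j/\nu_j$, $w_{j,n}=\frac{1}{n\Theta_{j,n}}$; for each $k$: $M_{k,j}=\rho_j\nu_jp_{k,j}$, $\upsilon_{k,n}=\sum_{j=1}^n\rho_j^2\nu_j^2p_{k,j}$, $\varphi_{k,n}=1-\frac{\gamma_k}{n}\upsilon_{k,n}$,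 $\varphi_n=(\varphi_{k,n})_k$. Define the $n\times n$ matrix $L_n$ by $(L_n)_{k,j}=\frac{1}{\varphi_{k,n}}w_{j,n}a_jM_{k,j}=\frac{\rho_j^2\zeta_jp_{k,j}}{n\varphi_{k,n}\Theta_{j,n}}$, and vectors $V_n,U_n\in\mathbb{R}^n$ by $(V_n)_k=\frac{n}{\gamma_k\sigma^2\varphi_{k,n}}$ and $(U_n)_k=-\frac{1}{\varphi_{k,n}}(C_{k,n}+r_{k,n})$, where $C_{k,n}=\frac{1}{\sigma\sqrt n}\sum_{j=1}^n\frac{1-\zeta_j}{\Theta_{j,n}}M_{k,j}$ and $r_{k,n}=\frac{1}{\sigma\sqrt n}\frac{\rho_k\nu_k}{c_k}p_{k,k}$. *)

theory Defs
  imports "Jordan_Normal_Form.Spectral_Radius"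
begin

(* Indices 1..n of the paper are rendered as 0..n-1. Model parameters
   c, gam (gamma), nu, rho are functions nat => real; only values at
   indices < n matter. *)

definition pp :: "(nat \<Rightarrow> real) \<Rightarrow> (nat \<Rightarrow> real) \<Rightarrow> (nat \<Rightarrow> real) \<Rightarrow> nat \<Rightarrow> nat \<Rightarrow> real" where
  "pp c gam nu i j = (if j \<noteq> i then 1 / (gam i * (nu j)^2) else 1 / (gam i * (nu i)^2 + 1 / c i))"

definition Theta :: "(nat \<Rightarrow> real) \<Rightarrow> (nat \<Rightarrow> real) \<Rightarrow> (nat \<Rightarrow> real) \<Rightarrow> nat \<Rightarrow> nat \<Rightarrow> real" where
  "Theta c gam nu n j = (\<Sum>i<n. pp c gam nu i j)"

definition zeta :: "(nat \<Rightarrow> real) \<Rightarrow> (nat \<Rightarrow> real) \<Rightarrow> (nat \<Rightarrow> real) \<Rightarrow> nat \<Rightarrow> real" where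
  "zeta c gam nu j = pp c gam nu j j / c j"

definition aa :: "(nat \<Rightarrow> real) \<Rightarrow> (nat \<Rightarrow> real) \<Rightarrow> (nat \<Rightarrow> real) \<Rightarrow> (nat \<Rightarrow> real) \<Rightarrow> nat \<Rightarrow> real" where
  "aa c gam nu rho j = rho j * zeta c gam nu j / nu j"

definition ww :: "(nat \<Rightarrow> real) \<Rightarrow> (nat \<Rightarrow> real) \<Rightarrow> (nat \<Rightarrow> real) \<Rightarrow> nat \<Rightarrow> nat \<Rightarrow> real" where
  "ww c gam nu n j = 1 / (real n * Theta c gam nu n j)"

definition MM :: "(nat \<Rightarrow> real) \<Rightarrow> (nat \<Rightarrow> real) \<Rightarrow> (nat \<Rightarrow> real) \<Rightarrow> (nat \<Rightarrow> real) \<Rightarrow> nat \<Rightarrow> nat \<Rightarrow> real" where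
  "MM c gam nu rho k j = rho j * nu j * pp c gam nu k j"

definition upsilon :: "(nat \<Rightarrow> real) \<Rightarrow> (nat \<Rightarrow> real) \<Rightarrow> (nat \<Rightarrow> real) \<Rightarrow> (nat \<Rightarrow> real) \<Rightarrow> nat \<Rightarrow> nat \<Rightarrow> real" where
  "upsilon c gam nu rho n k = (\<Sum>j<n. (rho j)^2 * (nu j)^2 * pp c gam nu k j)"

definition phi :: "(nat \<Rightarrow> real) \<Rightarrow> (nat \<Rightarrow> real) \<Rightarrow> (nat \<Rightarrow> real) \<Rightarrow> (nat \<Rightarrow> real) \<Rightarrow> nat \<Rightarrow> nat \<Rightarrow> real" where
  "phi c gam nu rho n k = 1 - gam k / real n * upsilon c gam nu rho n k"

definition phi_vec :: "(nat \<Rightarrow> real) \<Rightarrow> (nat \<Rightarrow> real) \<Rightarrow> (nat \<Rightarrow> real) \<Rightarrow> (nat \<Rightarrow> real) \<Rightarrow> nat \<Rightarrow> real vec" where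
  "phi_vec c gam nu rho n = vec n (\<lambda>k. phi c gam nu rho n k)"

definition Lmat :: "(nat \<Rightarrow> real) \<Rightarrow> (nat \<Rightarrow> real) \<Rightarrow> (nat \<Rightarrow> real) \<Rightarrow> (nat \<Rightarrow> real) \<Rightarrow> nat \<Rightarrow> real mat" where
  "Lmat c gam nu rho n = mat n n (\<lambda>(k, j).
     1 / phi c gam nu rho n k * ww c gam nu n j * aa c gam nu rho j * MM c gam nu rho k j)"

definition Vvec :: "(nat \<Rightarrow> real) \<Rightarrow> (nat \<Rightarrow> real) \<Rightarrow> (nat \<Rightarrow> real) \<Rightarrow> (nat \<Rightarrow> real) \<Rightarrow> real \<Rightarrow> nat \<Rightarrow> real vec" where
  "Vvec c gam nu rho sigma n = vec n (\<lambda>k. real n / (gam k * sigma^2 * phi c gam nu rho n k))"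

definition Cterm :: "(nat \<Rightarrow> real) \<Rightarrow> (nat \<Rightarrow> real) \<Rightarrow> (nat \<Rightarrow> real) \<Rightarrow> (nat \<Rightarrow> real) \<Rightarrow> real \<Rightarrow> nat \<Rightarrow> nat \<Rightarrow> real" where
  "Cterm c gam nu rho sigma n k = 1 / (sigma * sqrt (real n)) *
     (\<Sum>j<n. (1 - zeta c gam nu j) / Theta c gam nu n j * MM c gam nu rho k j)"

definition rterm :: "(nat \<Rightarrow> real) \<Rightarrow> (nat \<Rightarrow> real) \<Rightarrow> (nat \<Rightarrow> real) \<Rightarrow> (nat \<Rightarrow> real) \<Rightarrow> real \<Rightarrow> nat \<Rightarrow> nat \<Rightarrow> real" where
  "rterm c gam nu rho sigma n k = 1 / (sigma * sqrt (real n)) * (rho k * nu k / c k * pp c gam nu k k)"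

definition Uvec :: "(nat \<Rightarrow> real) \<Rightarrow> (nat \<Rightarrow> real) \<Rightarrow> (nat \<Rightarrow> real) \<Rightarrow> (nat \<Rightarrow> real) \<Rightarrow> real \<Rightarrow> nat \<Rightarrow> real vec" where
  "Uvec c gam nu rho sigma n = vec n (\<lambda>k. - (1 / phi c gam nu rho n k) *
     (Cterm c gam nu rho sigma n k + rterm c gam nu rho sigma n k))"

definition gobj :: "(nat \<Rightarrow> real) \<Rightarrow> (nat \<Rightarrow> real) \<Rightarrow> (nat \<Rightarrow> real) \<Rightarrow> (nat \<Rightarrow> real) \<Rightarrow> real \<Rightarrow> nat \<Rightarrow> real mat \<Rightarrow> real vec \<Rightarrow> real" where
  "gobj c gam nu rho sigma n zQ zS =
     - (1 / real n) * (\<Sum>i<n.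
         (zQ $$ (i, i))^2 / (2 * c i)
       + gam i / 2 * (\<Sum>j<n. (nu j)^2 * (zQ $$ (i, j))^2)
       + gam i * sigma^2 / 2 * (zS $ i)^2
       + gam i * sigma / sqrt (real n) * zS $ i * (\<Sum>j<n. rho j * nu j * zQ $$ (i, j)))
     + (1 / real n) * (\<Sum>i<n. zQ $$ (i, i) / c i)"

definition feasible :: "nat \<Rightarrow> real mat \<Rightarrow> real vec \<Rightarrow> bool" where
  "feasible n zQ zS \<longleftrightarrow> zQ \<in> carrier_mat n n \<and> zS \<in> carrier_vec n \<and>
     (\<forall>j<n. (\<Sum>i<n. zQ $$ (i, j)) = 1) \<and> (\<Sum>k<n. zS $ k) = 0"

definition nonsingular_M_matrix :: "nat \<Rightarrow> real mat \<Rightarrow> bool" where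
  "nonsingular_M_matrix n A \<longleftrightarrow> A \<in> carrier_mat n n \<and>
     (\<exists>s B. B \<in> carrier_mat n n \<and> (\<forall>i<n. \<forall>j<n. B $$ (i, j) \<ge> 0) \<and>
            A = s \<cdot>\<^sub>m 1\<^sub>m n - B \<and> spectral_radius (map_mat complex_of_real B) < s)"

definition minv :: "nat \<Rightarrow> real mat \<Rightarrow> real mat" where
  "minv n A = (SOME B. B \<in> carrier_mat n n \<and> A * B = 1\<^sub>m n \<and> B * A = 1\<^sub>m n)"

end

theory Submission
  imports Defs
begin

lemma mat_vec_nth:
  assumes "A \<in> carrier_mat n m" "v \<in> carrier_vec m" "k < n"
  shows "(A *\<^sub>v v) $ k = (\<Sum>j<m. A $$ (k, j) * v $ j)"
  using assms by (simp add: scalar_prod_def atLeast0LessThan row_def)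

lemma key_lemma:
  fixes l :: "nat \<Rightarrow> nat \<Rightarrow> real" and f z :: "nat \<Rightarrow> real"
  assumes fpos: "\<forall>k<n. f k > 0" and lnn: "\<forall>k<n. \<forall>j<n. l k j \<ge> 0"
    and col: "\<forall>j<n. (\<Sum>k<n. l k j * f k) < f j"
    and znn: "\<forall>k<n. z k \<ge> 0" and zle: "\<forall>k<n. z k \<le> (\<Sum>j<n. l k j * z j)"
  shows "\<forall>k<n. z k = 0"
proof (rule ccontr)
  assume "\<not> (\<forall>k<n. z k = 0)"
  then obtain k0 where k0: "k0 < n" "z k0 > 0" using znn by force
  have "(\<Sum>k<n. f k * z k) \<le> (\<Sum>k<n. f k * (\<Sum>j<n. l k j * z j))"
    by (rule sum_mono) (use fpos zle in \<open>auto intro: mult_left_mono\<close>)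
  also have "\<dots> = (\<Sum>j<n. z j * (\<Sum>k<n. l k j * f k))"
    unfolding sum_distrib_left by (subst sum.swap) (simp add: mult_ac)
  also have "\<dots> < (\<Sum>j<n. z j * f j)"
  proof (rule sum_strict_mono_ex1)
    show "\<forall>x\<in>{..<n}. z x * (\<Sum>k<n. l k x * f k) \<le> z x * f x"
    proof
      fix x assume x: "x \<in> {..<n}"
      show "z x * (\<Sum>k<n. l k x * f k) \<le> z x * f x"
        using col znn x by (intro mult_left_mono) (auto simp: less_imp_le)
    qed
    show "\<exists>a\<in>{..<n}. z a * (\<Sum>k<n. l k a * f k) < z a * f a"
      using col k0 by (intro bexI[of _ k0]) auto
  qed simp
  finally show False by (simp add: mult.commute)
qed



locale mfg =
  fixes n :: nat and sigma :: real and c gam nu rho :: "nat \<Rightarrow> real"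
  assumes n_pos: "n \<ge> 1" and sigma_pos: "sigma > 0"
    and c_pos: "\<forall>i<n. c i > 0" and gam_pos: "\<forall>i<n. gam i > 0"
    and nu_pos: "\<forall>i<n. nu i > 0" and rho_bd: "\<forall>i<n. -1 < rho i \<and> rho i < 1"

context mfg
begin

lemma pp_pos: "i < n \<Longrightarrow> j < n \<Longrightarrow> pp c gam nu i j > 0"
  using c_pos gam_pos nu_pos by (auto simp: pp_def intro!: add_pos_pos)

lemma gnp: "i < n \<Longrightarrow> j < n \<Longrightarrow>
  gam i * (nu j)^2 * pp c gam nu i j = (if i = j then 1 - zeta c gam nu j else 1)"
proof -
  assume i: "i < n" and j: "j < n"
  have g: "gam i > 0" "nu j > 0" "c j > 0" using i j gam_pos nu_pos c_pos by auto
  have p: "gam j * (nu j)^2 + 1 / c j > 0" using g j gam_pos by (auto intro!: add_pos_pos)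
  show ?thesis
  proof (cases "i = j")
    case True
    have gj: "gam j > 0" using g True by simp
    have "c j + c j * (c j * (gam j * (nu j)^2)) > 0" using g gj by (intro add_pos_pos mult_pos_pos) auto
    then show ?thesis using True g p by (simp add: pp_def zeta_def field_simps)
  next
    case False
    then show ?thesis using g by (simp add: pp_def)
  qed
qed

lemma zeta_bounds: "j < n \<Longrightarrow> 0 < zeta c gam nu j \<and> zeta c gam nu j < 1"
proof -
  assume j: "j < n"
  have "zeta c gam nu j = 1 - gam j * (nu j)^2 * pp c gam nu j j" using gnp[OF j j] by simp
  moreover have "gam j * (nu j)^2 * pp c gam nu j j > 0"
    using j gam_pos nu_pos pp_pos[OF j j] by (intro mult_pos_pos) auto
  moreover have "zeta c gam nu j > 0" using pp_pos[OF j j] c_pos j by (simp add: zeta_def)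
  ultimately show ?thesis by linarith
qed

lemma Theta_pos: "j < n \<Longrightarrow> Theta c gam nu n j > 0"
  unfolding Theta_def using n_pos pp_pos by (intro sum_pos) auto

lemma sumrho: "(\<Sum>j<n. (rho j)^2) < real n"
proof -
  have "(\<Sum>j<n. (rho j)^2) < (\<Sum>j<n. 1)"
    using n_pos rho_bd by (intro sum_strict_mono) (auto simp: abs_square_less_1 lessThan_empty_iff)
  then show ?thesis by simp
qed

lemma gam_ups: "k < n \<Longrightarrow> gam k * upsilon c gam nu rho n k
   = (\<Sum>j<n. (rho j)^2) - (rho k)^2 * zeta c gam nu k"
proof -
  assume k: "k < n"
  have "gam k * upsilon c gam nu rho n k = (\<Sum>j<n. (rho j)^2 * (gam k * (nu j)^2 * pp c gam nu k j))"
    unfolding upsilon_def sum_distrib_left by (rule sum.cong) (auto simp: mult_ac)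
  also have "\<dots> = (\<Sum>j<n. (rho j)^2 - (if j = k then (rho k)^2 * zeta c gam nu k else 0))"
  proof (rule sum.cong)
    fix x assume "x \<in> {..<n}"
    then show "(rho x)^2 * (gam k * (nu x)^2 * pp c gam nu k x)
      = (rho x)^2 - (if x = k then (rho k)^2 * zeta c gam nu k else 0)"
      using gnp[OF k, of x] by (auto simp: right_diff_distrib)
  qed simp
  also have "\<dots> = (\<Sum>j<n. (rho j)^2) - (rho k)^2 * zeta c gam nu k"
    using k by (simp add: sum_subtractf)
  finally show ?thesis .
qed

lemma phi_eq: "k < n \<Longrightarrow> phi c gam nu rho n k
   = 1 - (\<Sum>j<n. (rho j)^2) / real n + (rho k)^2 * zeta c gam nu k / real n"
proof -
  assume k: "k < n"
  have "phi c gam nu rho n k = 1 - (gam k * upsilon c gam nu rho n k) / real n"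
    by (simp add: phi_def)
  then show ?thesis using gam_ups[OF k] by (simp add: diff_divide_distrib)
qed

lemma one_minus_pos: "1 - (\<Sum>j<n. (rho j)^2) / real n > 0"
  using sumrho n_pos by (simp add: field_simps)

lemma phi_pos: "k < n \<Longrightarrow> phi c gam nu rho n k > 0"
proof -
  assume k: "k < n"
  have "(rho k)^2 * zeta c gam nu k / real n \<ge> 0" using zeta_bounds[OF k] by simp
  then show ?thesis using phi_eq[OF k] one_minus_pos by linarith
qed

lemma L_entry: "k < n \<Longrightarrow> j < n \<Longrightarrow> Lmat c gam nu rho n $$ (k, j)
   = (rho j)^2 * zeta c gam nu j * pp c gam nu k j / (real n * phi c gam nu rho n k * Theta c gam nu n j)"
proof -
  assume k: "k < n" and j: "j < n"
  have "nu j > 0" using nu_pos j by auto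
  then show ?thesis using k j
    by (simp add: Lmat_def ww_def aa_def MM_def power2_eq_square mult_ac)
qed

lemma L_nonneg: "k < n \<Longrightarrow> j < n \<Longrightarrow> Lmat c gam nu rho n $$ (k, j) \<ge> 0"
  using L_entry zeta_bounds pp_pos phi_pos Theta_pos n_pos
  by (simp add: less_imp_le)

lemma L_col: "j < n \<Longrightarrow> (\<Sum>k<n. Lmat c gam nu rho n $$ (k, j) * phi c gam nu rho n k)
   = (rho j)^2 * zeta c gam nu j / real n"
proof -
  assume j: "j < n"
  have T: "Theta c gam nu n j > 0" using Theta_pos[OF j] .
  have "(\<Sum>k<n. Lmat c gam nu rho n $$ (k, j) * phi c gam nu rho n k)
     = (\<Sum>k<n. ((rho j)^2 * zeta c gam nu j / (real n * Theta c gam nu n j)) * pp c gam nu k j)"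
  proof (rule sum.cong)
    fix x assume x: "x \<in> {..<n}"
    then have "phi c gam nu rho n x > 0" using phi_pos by auto
    then show "Lmat c gam nu rho n $$ (x, j) * phi c gam nu rho n x
       = ((rho j)^2 * zeta c gam nu j / (real n * Theta c gam nu n j)) * pp c gam nu x j"
      using x j by (simp add: L_entry)
  qed simp
  also have "\<dots> = ((rho j)^2 * zeta c gam nu j / (real n * Theta c gam nu n j)) * Theta c gam nu n j"
    by (simp add: Theta_def sum_distrib_left)
  also have "\<dots> = (rho j)^2 * zeta c gam nu j / real n" using T by simp
  finally show ?thesis .
qed

lemma L_col_less: "j < n \<Longrightarrow> (\<Sum>k<n. Lmat c gam nu rho n $$ (k, j) * phi c gam nu rho n k)
   < phi c gam nu rho n j"
  using L_col phi_eq one_minus_pos by simp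

end


context mfg
begin

abbreviation "LL \<equiv> Lmat c gam nu rho n"
abbreviation "IL \<equiv> 1\<^sub>m n - LL"

lemma LL_carrier: "LL \<in> carrier_mat n n"
  by (simp add: Lmat_def)

lemma IL_carrier: "IL \<in> carrier_mat n n"
  using LL_carrier by auto

lemma IL_nth: "v \<in> carrier_vec n \<Longrightarrow> k < n \<Longrightarrow>
   (IL *\<^sub>v v) $ k = v $ k - (\<Sum>j<n. LL $$ (k, j) * v $ j)"
proof -
  assume v: "v \<in> carrier_vec n" and k: "k < n"
  have "(IL *\<^sub>v v) $ k = (\<Sum>j<n. IL $$ (k, j) * v $ j)"
    by (rule mat_vec_nth[OF IL_carrier v k])
  also have "\<dots> = (\<Sum>j<n. (if k = j then v $ j else 0) - LL $$ (k, j) * v $ j)"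
    using k LL_carrier by (intro sum.cong) (auto simp: left_diff_distrib)
  also have "\<dots> = v $ k - (\<Sum>j<n. LL $$ (k, j) * v $ j)"
    using k by (simp add: sum_subtractf)
  finally show ?thesis .
qed

lemma no_expand:
  assumes "\<forall>k<n. z k \<ge> 0" "\<forall>k<n. z k \<le> (\<Sum>j<n. LL $$ (k, j) * z j)"
  shows "\<forall>k<n. z k = 0"
  by (rule key_lemma[where f = "\<lambda>k. phi c gam nu rho n k" and l = "\<lambda>k j. LL $$ (k, j)"])
     (use assms phi_pos L_nonneg L_col_less in auto)

lemma spec_lt1: "spectral_radius (map_mat complex_of_real LL) < 1"
proof -
  let ?C = "map_mat complex_of_real LL"
  have Cc: "?C \<in> carrier_mat n n" using LL_carrier by simp
  have ev: "norm lam < 1" if lam: "lam \<in> spectrum ?C" for lam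
  proof (rule ccontr)
    assume nl: "\<not> norm lam < 1"
    from lam obtain x where x: "x \<in> carrier_vec n" "x \<noteq> 0\<^sub>v n" "?C *\<^sub>v x = lam \<cdot>\<^sub>v x"
      unfolding spectrum_def eigenvalue_def eigenvector_def using Cc by auto
    have le: "norm (x $ k) \<le> (\<Sum>j<n. LL $$ (k, j) * norm (x $ j))" if k: "k < n" for k
    proof -
      have "norm lam * norm (x $ k) = norm ((?C *\<^sub>v x) $ k)"
        using x(3) k x(1) by (simp add: norm_mult)
      also have "\<dots> = norm (\<Sum>j<n. complex_of_real (LL $$ (k, j)) * x $ j)"
        using mat_vec_nth[OF Cc x(1) k] k LL_carrier by simp
      also have "\<dots> \<le> (\<Sum>j<n. norm (complex_of_real (LL $$ (k, j)) * x $ j))"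
        by (rule norm_sum)
      also have "\<dots> = (\<Sum>j<n. LL $$ (k, j) * norm (x $ j))"
        using k L_nonneg by (intro sum.cong) (auto simp: norm_mult)
      finally have "norm lam * norm (x $ k) \<le> (\<Sum>j<n. LL $$ (k, j) * norm (x $ j))" .
      moreover have "norm (x $ k) \<le> norm lam * norm (x $ k)"
        using nl by (simp add: mult_le_cancel_right1)
      ultimately show ?thesis by linarith
    qed
    have "\<forall>k<n. norm (x $ k) = 0"
      by (rule no_expand) (use le in auto)
    then have "x = 0\<^sub>v n" using x(1) by (intro eq_vecI) auto
    then show False using x(2) by simp
  qed
  have "n > 0" using n_pos by simp
  from spectral_radius_mem_max(1)[OF Cc this] ev show ?thesis by auto
qed

lemma det_IL: "det IL \<noteq> 0"
proof
  assume "det IL = 0"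
  then obtain v where v: "v \<in> carrier_vec n" "v \<noteq> 0\<^sub>v n" "IL *\<^sub>v v = 0\<^sub>v n"
    using det_0_iff_vec_prod_zero[OF IL_carrier] by auto
  have le: "\<bar>v $ k\<bar> \<le> (\<Sum>j<n. LL $$ (k, j) * \<bar>v $ j\<bar>)" if k: "k < n" for k
  proof -
    have "v $ k = (\<Sum>j<n. LL $$ (k, j) * v $ j)"
      using IL_nth[OF v(1) k] v(3) k by simp
    then have "\<bar>v $ k\<bar> = \<bar>\<Sum>j<n. LL $$ (k, j) * v $ j\<bar>" by simp
    also have "\<dots> \<le> (\<Sum>j<n. \<bar>LL $$ (k, j) * v $ j\<bar>)" by (rule sum_abs)
    also have "\<dots> = (\<Sum>j<n. LL $$ (k, j) * \<bar>v $ j\<bar>)"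
      using k L_nonneg by (intro sum.cong) (auto simp: abs_mult)
    finally show ?thesis .
  qed
  have "\<forall>k<n. \<bar>v $ k\<bar> = 0"
    by (rule no_expand) (use le in auto)
  then have "v = 0\<^sub>v n" using v(1) by (intro eq_vecI) auto
  then show False using v(2) by simp
qed

lemma IL_inv_exists: "\<exists>B. B \<in> carrier_mat n n \<and> IL * B = 1\<^sub>m n \<and> B * IL = 1\<^sub>m n"
  using det_non_zero_imp_unit[OF IL_carrier det_IL, of "()"]
  unfolding Units_def ring_mat_def by auto

abbreviation "WW \<equiv> minv n IL"

lemma WW_props: "WW \<in> carrier_mat n n" "IL * WW = 1\<^sub>m n" "WW * IL = 1\<^sub>m n"
  using someI_ex[OF IL_inv_exists] unfolding minv_def by auto

lemma IL_invertible: "invertible_mat IL"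
  unfolding invertible_mat_def inverts_mat_def square_mat.simps
  using WW_props IL_carrier carrier_matD[OF LL_carrier] by auto

lemma nonneg_pres:
  assumes "\<forall>k<n. y k - (\<Sum>j<n. LL $$ (k, j) * y j) \<ge> 0"
  shows "\<forall>k<n. y k \<ge> 0"
proof -
  define z where "z k = max (- y k) 0" for k
  have "\<forall>k<n. z k = 0"
  proof (rule no_expand)
    show "\<forall>k<n. 0 \<le> z k" by (simp add: z_def)
    show "\<forall>k<n. z k \<le> (\<Sum>j<n. LL $$ (k, j) * z j)"
    proof (intro allI impI)
      fix k assume k: "k < n"
      have s0: "0 \<le> (\<Sum>j<n. LL $$ (k, j) * z j)"
        using k L_nonneg by (intro sum_nonneg) (auto simp: z_def)
      have "- (\<Sum>j<n. LL $$ (k, j) * y j) = (\<Sum>j<n. LL $$ (k, j) * (- y j))"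
        by (simp add: sum_negf)
      also have "\<dots> \<le> (\<Sum>j<n. LL $$ (k, j) * z j)"
        using k L_nonneg by (intro sum_mono mult_left_mono) (auto simp: z_def)
      finally have s1: "- (\<Sum>j<n. LL $$ (k, j) * y j) \<le> (\<Sum>j<n. LL $$ (k, j) * z j)" .
      show "z k \<le> (\<Sum>j<n. LL $$ (k, j) * z j)"
        using s0 s1 assms k by (auto simp: z_def)
    qed
  qed
  then show ?thesis by (auto simp: z_def max_def split: if_splits)
qed

lemma WW_nonneg: "k < n \<Longrightarrow> j < n \<Longrightarrow> WW $$ (k, j) \<ge> 0"
proof -
  assume k: "k < n" and j: "j < n"
  have "\<forall>i<n. WW $$ (i, j) - (\<Sum>l<n. LL $$ (i, l) * WW $$ (l, j)) \<ge> 0"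
  proof (intro allI impI)
    fix i assume i: "i < n"
    have "(IL * WW) $$ (i, j) = (IL *\<^sub>v col WW j) $ i"
      using i j carrier_matD[OF WW_props(1)] carrier_matD[OF LL_carrier] by simp
    also have "\<dots> = WW $$ (i, j) - (\<Sum>l<n. LL $$ (i, l) * WW $$ (l, j))"
      using IL_nth[of "col WW j" i] i j WW_props(1) by simp
    finally show "WW $$ (i, j) - (\<Sum>l<n. LL $$ (i, l) * WW $$ (l, j)) \<ge> 0"
      using WW_props(2) i j by (simp split: if_splits)
  qed
  from nonneg_pres[OF this] k show ?thesis by simp
qed

end


definition rowf :: "nat \<Rightarrow> real \<Rightarrow> (nat\<Rightarrow>real) \<Rightarrow> (nat\<Rightarrow>real) \<Rightarrow> (nat\<Rightarrow>real) \<Rightarrow> (nat\<Rightarrow>real)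
   \<Rightarrow> nat \<Rightarrow> (nat\<Rightarrow>nat\<Rightarrow>real) \<Rightarrow> (nat\<Rightarrow>real) \<Rightarrow> real" where
  "rowf n sigma c gam nu rho i Q S =
     (Q i i)^2 / (2 * c i)
       + gam i / 2 * (\<Sum>j<n. (nu j)^2 * (Q i j)^2)
       + gam i * sigma^2 / 2 * (S i)^2
       + gam i * sigma / sqrt (real n) * S i * (\<Sum>j<n. rho j * nu j * Q i j)"

lemma gobj_rowf: "gobj c gam nu rho sigma n zQ zS =
   - (1 / real n) * (\<Sum>i<n. rowf n sigma c gam nu rho i (\<lambda>i j. zQ $$ (i, j)) (\<lambda>i. zS $ i))
   + (1 / real n) * (\<Sum>i<n. zQ $$ (i, i) / c i)"
  by (simp add: gobj_def rowf_def)

lemma row_expand: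
  fixes Q D :: "nat \<Rightarrow> nat \<Rightarrow> real" and S E :: "nat \<Rightarrow> real"
  assumes i: "i < n"
  shows "rowf n sigma c gam nu rho i (\<lambda>i j. Q i j + D i j) (\<lambda>i. S i + E i)
    = rowf n sigma c gam nu rho i Q S
      + (\<Sum>j<n. D i j * ((if i = j then Q i i / c i else 0) + gam i * (nu j)^2 * Q i j
            + gam i * sigma / sqrt (real n) * S i * rho j * nu j))
      + E i * (gam i * sigma^2 * S i + gam i * sigma / sqrt (real n) * (\<Sum>j<n. rho j * nu j * Q i j))
      + rowf n sigma c gam nu rho i D E"
proof -
  let ?s = "sqrt (real n)"
  have h1: "(Q i i + D i i)^2 / (2 * c i) = (Q i i)^2 / (2 * c i) + D i i * (Q i i / c i) + (D i i)^2 / (2 * c i)"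
    by (cases "c i = 0") (simp_all add: field_simps power2_eq_square)
  have h2: "(\<Sum>j<n. (nu j)^2 * (Q i j + D i j)^2) = (\<Sum>j<n. (nu j)^2 * (Q i j)^2)
      + 2 * (\<Sum>j<n. D i j * ((nu j)^2 * Q i j)) + (\<Sum>j<n. (nu j)^2 * (D i j)^2)"
    by (simp add: power2_sum algebra_simps sum.distrib sum_distrib_left)
  have h3: "(\<Sum>j<n. rho j * nu j * (Q i j + D i j)) = (\<Sum>j<n. rho j * nu j * Q i j) + (\<Sum>j<n. rho j * nu j * D i j)"
    by (simp add: algebra_simps sum.distrib)
  have h4: "(\<Sum>j<n. D i j * ((if i = j then Q i i / c i else 0) + gam i * (nu j)^2 * Q i j
            + gam i * sigma / ?s * S i * rho j * nu j))
     = D i i * (Q i i / c i) + gam i * (\<Sum>j<n. D i j * ((nu j)^2 * Q i j))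
       + gam i * sigma / ?s * S i * (\<Sum>j<n. rho j * nu j * D i j)"
  proof -
    have "(\<Sum>j<n. D i j * ((if i = j then Q i i / c i else 0) + gam i * (nu j)^2 * Q i j
            + gam i * sigma / ?s * S i * rho j * nu j))
      = (\<Sum>j<n. (if i = j then D i i * (Q i i / c i) else 0)) + (\<Sum>j<n. gam i * (D i j * ((nu j)^2 * Q i j)))
        + (\<Sum>j<n. gam i * sigma / ?s * S i * (rho j * nu j * D i j))"
      unfolding sum.distrib[symmetric] by (rule sum.cong) (auto simp: algebra_simps)
    also have "\<dots> = D i i * (Q i i / c i) + gam i * (\<Sum>j<n. D i j * ((nu j)^2 * Q i j))
       + gam i * sigma / ?s * S i * (\<Sum>j<n. rho j * nu j * D i j)"
      using i by (simp add: sum_distrib_left)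
    finally show ?thesis .
  qed
  show ?thesis
    unfolding rowf_def h1 h2 h3 h4 by (simp add: ring_distribs power2_sum)
qed



context mfg
begin

definition muf :: "(nat \<Rightarrow> real) \<Rightarrow> nat \<Rightarrow> real" where
  "muf z j = 1 / (real n * Theta c gam nu n j) *
     (1 - zeta c gam nu j - sigma / sqrt (real n) * aa c gam nu rho j * z j)"

definition zQf :: "(nat \<Rightarrow> real) \<Rightarrow> nat \<Rightarrow> nat \<Rightarrow> real" where
  "zQf z i j = pp c gam nu i j * (real n * muf z j + (if i = j then 1 / c i else 0)
       - gam i * sigma / sqrt (real n) * z i * rho j * nu j)"

lemma s_facts: "sqrt (real n) > 0" "sqrt (real n) * sqrt (real n) = real n" "real n > 0"
  using n_pos by auto

lemma colsum:
  assumes z0: "(\<Sum>i<n. z i) = 0" and j: "j < n"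
  shows "(\<Sum>i<n. zQf z i j) = 1"
proof -
  let ?s = "sqrt (real n)"
  have T: "Theta c gam nu n j > 0" using Theta_pos[OF j] .
  have nuj: "nu j > 0" using nu_pos j by auto
  have e1: "(\<Sum>i<n. zQf z i j) = (\<Sum>i<n. pp c gam nu i j) * (real n * muf z j)
      + (\<Sum>i<n. if i = j then pp c gam nu j j / c j else 0)
      - sigma / ?s * rho j * nu j * (\<Sum>i<n. gam i * pp c gam nu i j * z i)"
    unfolding zQf_def sum_distrib_right sum_distrib_left sum_subtractf[symmetric] sum.distrib[symmetric]
    by (rule sum.cong) (auto simp: algebra_simps)
  have e2: "(\<Sum>i<n. pp c gam nu i j) * (real n * muf z j)
      = 1 - zeta c gam nu j - sigma / ?s * aa c gam nu rho j * z j"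
    using T s_facts by (simp add: muf_def Theta_def[symmetric])
  have e3: "(\<Sum>i<n. if i = j then pp c gam nu j j / c j else 0) = zeta c gam nu j"
    using j by (simp add: zeta_def)
  have "(\<Sum>i<n. gam i * pp c gam nu i j * z i) = (\<Sum>i<n. (gam i * (nu j)^2 * pp c gam nu i j) * z i) / (nu j)^2"
    using nuj by (simp add: sum_divide_distrib mult.assoc)
  also have "\<dots> = (\<Sum>i<n. z i - (if i = j then zeta c gam nu j * z j else 0)) / (nu j)^2"
    by (rule arg_cong[where f = "\<lambda>x. x / (nu j)^2"], rule sum.cong)
       (use j gnp in \<open>auto simp: algebra_simps\<close>)
  also have "\<dots> = - zeta c gam nu j * z j / (nu j)^2"
    using j z0 by (simp add: sum_subtractf)
  finally have e4: "(\<Sum>i<n. gam i * pp c gam nu i j * z i) = - zeta c gam nu j * z j / (nu j)^2" .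
  show ?thesis unfolding e1 e2 e3 e4 using nuj by (simp add: aa_def power2_eq_square field_simps)
qed

lemma GQ:
  assumes i: "i < n" and j: "j < n"
  shows "(if i = j then zQf z i i / c i else 0) + gam i * (nu j)^2 * zQf z i j
     + gam i * sigma / sqrt (real n) * z i * rho j * nu j
     = real n * muf z j + (if i = j then 1 / c i else 0)"
proof -
  have "(if i = j then zQf z i i / c i else 0) + gam i * (nu j)^2 * zQf z i j
     = zQf z i j * ((if i = j then 1 / c i else 0) + gam i * (nu j)^2)"
    by (auto simp: algebra_simps)
  also have "\<dots> = real n * muf z j + (if i = j then 1 / c i else 0)
       - gam i * sigma / sqrt (real n) * z i * rho j * nu j"
  proof -
    have "pp c gam nu i j * ((if i = j then 1 / c i else 0) + gam i * (nu j)^2) = 1"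
      using i j c_pos gam_pos nu_pos pp_pos[OF i j] by (auto simp: pp_def add_pos_pos)
    moreover have "zQf z i j * ((if i = j then 1 / c i else 0) + gam i * (nu j)^2)
      = (pp c gam nu i j * ((if i = j then 1 / c i else 0) + gam i * (nu j)^2)) *
        (real n * muf z j + (if i = j then 1 / c i else 0) - gam i * sigma / sqrt (real n) * z i * rho j * nu j)"
      unfolding zQf_def by (simp only: mult_ac)
    ultimately show ?thesis by simp
  qed
  finally show ?thesis by simp
qed

lemma GS:
  assumes rel: "\<forall>k<n. z k - (\<Sum>j<n. LL $$ (k, j) * z j)
     = t * Vvec c gam nu rho sigma n $ k + Uvec c gam nu rho sigma n $ k"
    and i: "i < n"
  shows "gam i * sigma^2 * z i + gam i * sigma / sqrt (real n) * (\<Sum>j<n. rho j * nu j * zQf z i j)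
     = real n * t"
proof -
  define s where "s = sqrt (real n)"
  have sp: "s > 0" and ns: "real n = s * s" using s_facts unfolding s_def by auto
  define X where "X = (\<Sum>j<n. rho j * nu j * zQf z i j)"
  define S1 where "S1 = (\<Sum>j<n. MM c gam nu rho i j * (aa c gam nu rho j * z j / Theta c gam nu n j))"
  define C where "C = Cterm c gam nu rho sigma n i"
  define r where "r = rterm c gam nu rho sigma n i"
  define ph where "ph = phi c gam nu rho n i"
  define up where "up = upsilon c gam nu rho n i"
  define Lz where "Lz = (\<Sum>j<n. LL $$ (i, j) * z j)"
  have php: "ph > 0" using phi_pos[OF i] unfolding ph_def .
  have gp: "gam i > 0" using gam_pos i by auto
  have e1: "X = (\<Sum>j<n. MM c gam nu rho i j * (real n * muf z j))
      + (\<Sum>j<n. if i = j then rho i * nu i * pp c gam nu i i / c i else 0)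
      - gam i * sigma / s * z i * up"
    unfolding X_def up_def upsilon_def zQf_def MM_def sum_distrib_left sum_subtractf[symmetric] sum.distrib[symmetric] s_def
    by (rule sum.cong) (auto simp: algebra_simps power2_eq_square)
  have e1': "(\<Sum>j<n. if i = j then rho i * nu i * pp c gam nu i i / c i else 0) = sigma * s * r"
    using i sigma_pos sp by (simp add: r_def rterm_def s_def)
  have e3: "(\<Sum>j<n. MM c gam nu rho i j * (real n * muf z j)) = sigma * s * C - sigma / s * S1"
  proof -
    have "(\<Sum>j<n. MM c gam nu rho i j * (real n * muf z j))
       = (\<Sum>j<n. (1 - zeta c gam nu j) / Theta c gam nu n j * MM c gam nu rho i j
                 - sigma / s * (MM c gam nu rho i j * (aa c gam nu rho j * z j / Theta c gam nu n j)))"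
    proof (rule sum.cong)
      fix j assume "j \<in> {..<n}"
      then have T: "Theta c gam nu n j > 0" using Theta_pos by auto
      show "MM c gam nu rho i j * (real n * muf z j)
        = (1 - zeta c gam nu j) / Theta c gam nu n j * MM c gam nu rho i j
                 - sigma / s * (MM c gam nu rho i j * (aa c gam nu rho j * z j / Theta c gam nu n j))"
        using T s_facts unfolding muf_def s_def by (simp add: field_simps)
    qed simp
    also have "\<dots> = sigma * s * C - sigma / s * S1"
      using sigma_pos sp
      by (simp add: sum_subtractf C_def Cterm_def S1_def sum_distrib_left s_def)
    finally show ?thesis .
  qed
  have e4: "S1 = real n * ph * Lz"
  proof -
    have "Lz = (\<Sum>j<n. MM c gam nu rho i j * (aa c gam nu rho j * z j / Theta c gam nu n j)) / (real n * ph)"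
      unfolding Lz_def sum_divide_distrib
      by (rule sum.cong) (use i in \<open>auto simp: Lmat_def ww_def ph_def mult_ac\<close>)
    then show ?thesis using php s_facts unfolding S1_def by (simp add: field_simps)
  qed
  have e6: "gam i * up = real n * (1 - ph)"
    using s_facts unfolding ph_def up_def phi_def by (simp add: field_simps)
  have up_eq: "up = real n * (1 - ph) / gam i" using e6 gp by (simp add: field_simps)
  have relI: "z i - Lz = t * (real n / (gam i * sigma^2 * ph)) - (C + r) / ph"
    using rel i unfolding Lz_def by (simp add: Vvec_def Uvec_def ph_def C_def r_def)
  have z_eq: "z i = Lz + t * (real n / (gam i * sigma^2 * ph)) - (C + r) / ph"
    using relI by simp
  have X_eq: "X = sigma * s * (C + r) - sigma / s * (real n * ph * Lz) - gam i * sigma / s * z i * up"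
    using e1 e1' e3 e4 by (simp add: algebra_simps)
  have "gam i * sigma^2 * z i + gam i * sigma / s * X = real n * t"
    unfolding X_eq up_eq z_eq ns using sp gp php sigma_pos
    by (simp add: field_simps power2_eq_square)
  then show ?thesis unfolding X_def s_def .
qed

lemma rowf_pos:
  assumes i: "i < n"
  shows "rowf n sigma c gam nu rho i D E \<ge> 0 \<and>
    ((E i \<noteq> 0 \<or> (\<exists>j<n. D i j \<noteq> 0)) \<longrightarrow> rowf n sigma c gam nu rho i D E > 0)"
proof -
  define s where "s = sqrt (real n)"
  have sp: "s > 0" and ns: "real n = s * s" using s_facts unfolding s_def by auto
  define SQ where "SQ = (\<Sum>j<n. (nu j * D i j + sigma * E i * rho j / s)^2)"
  define R where "R = (\<Sum>j<n. (rho j)^2)"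
  have B_id: "SQ = (\<Sum>j<n. (nu j)^2 * (D i j)^2) + 2 * sigma * E i / s * (\<Sum>j<n. rho j * nu j * D i j)
        + (sigma * E i)^2 / (s * s) * R"
    unfolding SQ_def R_def power2_sum sum.distrib sum_distrib_left
    by (simp add: power_mult_distrib power_divide algebra_simps power2_eq_square)
  have q: "1 - R / (s * s) > 0" using one_minus_pos ns unfolding R_def by simp
  have ci: "c i > 0" and gi: "gam i > 0" using c_pos gam_pos i by auto
  have rw: "rowf n sigma c gam nu rho i D E
     = (D i i)^2 / (2 * c i) + gam i / 2 * (SQ + (sigma * E i)^2 * (1 - R / (s * s)))"
    unfolding rowf_def B_id s_def[symmetric] using sp
    by (simp add: field_simps power2_eq_square)
  have SQ0: "SQ \<ge> 0" unfolding SQ_def by (rule sum_nonneg) simp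
  have t2: "(sigma * E i)^2 * (1 - R / (s * s)) \<ge> 0" using q by simp
  have nonneg: "rowf n sigma c gam nu rho i D E \<ge> 0"
    unfolding rw using ci gi SQ0 t2 by simp
  have strict: "rowf n sigma c gam nu rho i D E > 0" if h: "E i \<noteq> 0 \<or> (\<exists>j<n. D i j \<noteq> 0)"
  proof (cases "E i = 0")
    case False
    then have "(sigma * E i)^2 * (1 - R / (s * s)) > 0" using q sigma_pos by simp
    then show ?thesis unfolding rw using ci gi SQ0 by (simp add: add_nonneg_pos)
  next
    case True
    with h obtain j where j: "j < n" "D i j \<noteq> 0" by auto
    have "nu j > 0" using nu_pos j by auto
    then have "(nu j * D i j + sigma * E i * rho j / s)^2 > 0" using True j by simp
    also have "\<dots> \<le> SQ" unfolding SQ_def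
      by (rule member_le_sum[where f = "\<lambda>j. (nu j * D i j + sigma * E i * rho j / s)^2"]) (use j in auto)
    finally have "SQ > 0" .
    then show ?thesis unfolding rw using ci gi t2 by (simp add: add_nonneg_pos)
  qed
  show ?thesis using nonneg strict by blast
qed

end


context mfg
begin

lemma main_loc:
  fixes W :: "real mat" and u v zS :: "real vec" and thstar :: real and mu :: "nat \<Rightarrow> real" and zQ :: "real mat"
  assumes W: "W = minv n (1\<^sub>m n - Lmat c gam nu rho n)"
   and u: "u = W *\<^sub>v Vvec c gam nu rho sigma n" and v: "v = W *\<^sub>v Uvec c gam nu rho sigma n"
   and th: "thstar = - (\<Sum>k<n. v $ k) / (\<Sum>k<n. u $ k)"
   and zS: "zS = thstar \<cdot>\<^sub>v u + v"
   and mu: "mu = (\<lambda>j. 1 / (real n * Theta c gam nu n j) *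
                 (1 - zeta c gam nu j - sigma / sqrt (real n) * aa c gam nu rho j * zS $ j))"
   and zQ: "zQ = mat n n (\<lambda>(i, j). pp c gam nu i j *
                 (real n * mu j + (if i = j then 1 / c i else 0)
                  - gam i * sigma / sqrt (real n) * zS $ i * rho j * nu j))"
  shows "(\<forall>k<n. \<forall>j<n. Lmat c gam nu rho n $$ (k, j) \<ge> 0)
      \<and> (\<forall>k<n. (transpose_mat (Lmat c gam nu rho n) *\<^sub>v phi_vec c gam nu rho n) $ k < phi_vec c gam nu rho n $ k)
      \<and> spectral_radius (map_mat complex_of_real (Lmat c gam nu rho n)) < 1
      \<and> nonsingular_M_matrix n (1\<^sub>m n - Lmat c gam nu rho n)
      \<and> invertible_mat (1\<^sub>m n - Lmat c gam nu rho n)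
      \<and> (\<forall>k<n. \<forall>j<n. W $$ (k, j) \<ge> 0)
      \<and> (\<Sum>k<n. u $ k) \<noteq> 0
      \<and> feasible n zQ zS
      \<and> (\<forall>zQ' zS'. feasible n zQ' zS' \<and> (zQ', zS') \<noteq> (zQ, zS) \<longrightarrow>
            gobj c gam nu rho sigma n zQ' zS' < gobj c gam nu rho sigma n zQ zS)"
proof -
  let ?V = "Vvec c gam nu rho sigma n"
  let ?U = "Uvec c gam nu rho sigma n"
  have Wc: "W \<in> carrier_mat n n" using WW_props W by simp
  have Vc: "?V \<in> carrier_vec n" by (simp add: Vvec_def)
  have Uc: "?U \<in> carrier_vec n" by (simp add: Uvec_def)
  have uc: "u \<in> carrier_vec n" using u Wc Vc by simp
  have vc: "v \<in> carrier_vec n" using v Wc Uc by simp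
  have Vpos: "?V $ k > 0" if k: "k < n" for k
    using k phi_pos[OF k] gam_pos sigma_pos n_pos by (simp add: Vvec_def)
  have ILapp: "IL *\<^sub>v (W *\<^sub>v x) = x" if x: "x \<in> carrier_vec n" for x
  proof -
    have "IL *\<^sub>v (W *\<^sub>v x) = (IL * W) *\<^sub>v x"
      using assoc_mult_mat_vec[OF IL_carrier Wc x] by simp
    also have "\<dots> = x" using WW_props(2) W x by simp
    finally show ?thesis .
  qed
  have uV: "u $ k - (\<Sum>j<n. LL $$ (k, j) * u $ j) = ?V $ k" if k: "k < n" for k
    using IL_nth[OF uc k] ILapp[OF Vc] u by simp
  have vU: "v $ k - (\<Sum>j<n. LL $$ (k, j) * v $ j) = ?U $ k" if k: "k < n" for k
    using IL_nth[OF vc k] ILapp[OF Uc] v by simp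
  have unn: "u $ k \<ge> 0" if k: "k < n" for k
  proof -
    have "u $ k = (\<Sum>j<n. W $$ (k, j) * ?V $ j)" using mat_vec_nth[OF Wc Vc k] u by simp
    also have "\<dots> \<ge> 0"
    proof (rule sum_nonneg)
      fix j assume "j \<in> {..<n}"
      then show "0 \<le> W $$ (k, j) * ?V $ j"
        using WW_nonneg[of k j] Vpos[of j] k W by simp
    qed
    finally show ?thesis .
  qed
  have upos: "u $ k > 0" if k: "k < n" for k
  proof -
    have "(\<Sum>j<n. LL $$ (k, j) * u $ j) \<ge> 0"
      using L_nonneg k unn by (intro sum_nonneg) auto
    then show ?thesis using uV[OF k] Vpos[OF k] by linarith
  qed
  have sumu: "(\<Sum>k<n. u $ k) > 0" using n_pos upos by (intro sum_pos) (auto simp: lessThan_empty_iff)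
  have zSc: "zS \<in> carrier_vec n" using zS uc vc by simp
  have zSk: "zS $ k = thstar * u $ k + v $ k" if k: "k < n" for k
    using zS k uc vc by simp
  have sumzS: "(\<Sum>k<n. zS $ k) = 0"
  proof -
    have "(\<Sum>k<n. zS $ k) = thstar * (\<Sum>k<n. u $ k) + (\<Sum>k<n. v $ k)"
      by (simp add: zSk sum.distrib sum_distrib_left)
    then show ?thesis using th sumu by simp
  qed
  have rel: "\<forall>k<n. zS $ k - (\<Sum>j<n. LL $$ (k, j) * zS $ j) = thstar * ?V $ k + ?U $ k"
  proof (intro allI impI)
    fix k assume k: "k < n"
    have "(\<Sum>j<n. LL $$ (k, j) * zS $ j)
        = thstar * (\<Sum>j<n. LL $$ (k, j) * u $ j) + (\<Sum>j<n. LL $$ (k, j) * v $ j)"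
      by (simp add: zSk sum.distrib sum_distrib_left algebra_simps)
    then show "zS $ k - (\<Sum>j<n. LL $$ (k, j) * zS $ j) = thstar * ?V $ k + ?U $ k"
      using uV[OF k] vU[OF k] zSk[OF k] by (simp add: algebra_simps)
  qed
  define z where "z = (\<lambda>j. zS $ j)"
  have zQe: "zQ $$ (i, j) = zQf z i j" if "i < n" "j < n" for i j
    using that by (simp add: zQ mu zQf_def muf_def z_def)
  have zQc: "zQ \<in> carrier_mat n n" using zQ by simp
  have cols: "(\<Sum>i<n. zQ $$ (i, j)) = 1" if j: "j < n" for j
  proof -
    have "(\<Sum>i<n. zQ $$ (i, j)) = (\<Sum>i<n. zQf z i j)" using j zQe by simp
    also have "\<dots> = 1" using colsum[OF _ j] sumzS unfolding z_def by simp
    finally show ?thesis .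
  qed
  have feas: "feasible n zQ zS"
    unfolding feasible_def using zQc zSc cols sumzS by simp
  have GSz: "gam i * sigma^2 * zS $ i + gam i * sigma / sqrt (real n) * (\<Sum>j<n. rho j * nu j * zQ $$ (i, j))
     = real n * thstar" if i: "i < n" for i
  proof -
    have "(\<Sum>j<n. rho j * nu j * zQ $$ (i, j)) = (\<Sum>j<n. rho j * nu j * zQf z i j)"
      using i zQe by simp
    then show ?thesis using GS[OF _ i, of z thstar] rel unfolding z_def by simp
  qed
  have GQz: "(if i = j then zQ $$ (i, i) / c i else 0) + gam i * (nu j)^2 * zQ $$ (i, j)
     + gam i * sigma / sqrt (real n) * zS $ i * rho j * nu j
     = real n * muf z j + (if i = j then 1 / c i else 0)" if i: "i < n" and j: "j < n" for i j
  proof -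
    have zi: "zS $ i = z i" by (simp add: z_def)
    show ?thesis using GQ[OF i j, of z] by (simp only: zQe[OF i j] zQe[OF i i] zi)
  qed
  have opt: "gobj c gam nu rho sigma n zQ' zS' < gobj c gam nu rho sigma n zQ zS"
    if F: "feasible n zQ' zS'" and ne: "(zQ', zS') \<noteq> (zQ, zS)" for zQ' zS'
  proof -
    have Qc': "zQ' \<in> carrier_mat n n" and Sc': "zS' \<in> carrier_vec n"
      and cols': "\<forall>j<n. (\<Sum>i<n. zQ' $$ (i, j)) = 1" and sum': "(\<Sum>k<n. zS' $ k) = 0"
      using F unfolding feasible_def by auto
    define Q where "Q = (\<lambda>i j. zQ $$ (i, j))"
    define S where "S = (\<lambda>i. zS $ i)"
    define D where "D = (\<lambda>i j. zQ' $$ (i, j) - zQ $$ (i, j))"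
    define E where "E = (\<lambda>i. zS' $ i - zS $ i)"
    let ?s = "sqrt (real n)"
    let ?R = "\<lambda>i A B. rowf n sigma c gam nu rho i A B"
    have g': "gobj c gam nu rho sigma n zQ' zS'
       = - (1 / real n) * (\<Sum>i<n. ?R i (\<lambda>i j. Q i j + D i j) (\<lambda>i. S i + E i))
         + (1 / real n) * (\<Sum>i<n. Q i i / c i + D i i / c i)"
      by (simp add: gobj_rowf Q_def D_def S_def E_def add_divide_distrib[symmetric])
    have g0: "gobj c gam nu rho sigma n zQ zS
       = - (1 / real n) * (\<Sum>i<n. ?R i Q S) + (1 / real n) * (\<Sum>i<n. Q i i / c i)"
      by (simp add: gobj_rowf Q_def S_def)
    define GQt where "GQt = (\<lambda>i j. (if i = j then Q i i / c i else 0) + gam i * (nu j)^2 * Q i j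
            + gam i * sigma / ?s * S i * rho j * nu j)"
    define GSt where "GSt = (\<lambda>i. gam i * sigma^2 * S i + gam i * sigma / ?s * (\<Sum>j<n. rho j * nu j * Q i j))"
    have rows: "(\<Sum>i<n. ?R i (\<lambda>i j. Q i j + D i j) (\<lambda>i. S i + E i))
       = (\<Sum>i<n. ?R i Q S) + (\<Sum>i<n. \<Sum>j<n. D i j * GQt i j) + (\<Sum>i<n. E i * GSt i) + (\<Sum>i<n. ?R i D E)"
      unfolding sum.distrib[symmetric] GQt_def GSt_def
      by (rule sum.cong) (simp_all add: row_expand)
    have A1: "(\<Sum>i<n. \<Sum>j<n. D i j * GQt i j) = (\<Sum>i<n. D i i / c i)"
    proof -
      have "(\<Sum>i<n. \<Sum>j<n. D i j * GQt i j)
          = (\<Sum>i<n. \<Sum>j<n. D i j * (real n * muf z j) + (if i = j then D i i / c i else 0))"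
        using GQz unfolding GQt_def Q_def S_def
        by (intro sum.cong refl) (auto simp: algebra_simps)
      also have "\<dots> = (\<Sum>i<n. \<Sum>j<n. D i j * (real n * muf z j))
           + (\<Sum>i<n. \<Sum>j<n. (if i = j then D i i / c i else 0))"
        by (simp only: sum.distrib)
      also have "(\<Sum>i<n. \<Sum>j<n. D i j * (real n * muf z j)) = (\<Sum>j<n. real n * muf z j * (\<Sum>i<n. D i j))"
        by (subst sum.swap) (simp add: sum_distrib_left sum_distrib_right mult_ac)
      also have "(\<Sum>i<n. \<Sum>j<n. (if i = j then D i i / c i else 0)) = (\<Sum>i<n. D i i / c i)"
        by simp
      also have "(\<Sum>j<n. real n * muf z j * (\<Sum>i<n. D i j)) = 0"
      proof (rule sum.neutral, intro ballI)
        fix j assume "j \<in> {..<n}"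
        then have "(\<Sum>i<n. D i j) = 0" using cols' cols unfolding D_def by (simp add: sum_subtractf)
        then show "real n * muf z j * (\<Sum>i<n. D i j) = 0" by simp
      qed
      finally show ?thesis by simp
    qed
    have A2: "(\<Sum>i<n. E i * GSt i) = 0"
    proof -
      have "(\<Sum>i<n. E i * GSt i) = (\<Sum>i<n. E i * (real n * thstar))"
        using GSz unfolding GSt_def Q_def S_def by (intro sum.cong) auto
      also have "\<dots> = real n * thstar * (\<Sum>i<n. E i)" by (simp add: sum_distrib_left mult_ac)
      also have "(\<Sum>i<n. E i) = 0" using sum' sumzS unfolding E_def by (simp add: sum_subtractf)
      finally show ?thesis by simp
    qed
    have diff: "gobj c gam nu rho sigma n zQ' zS'
       = gobj c gam nu rho sigma n zQ zS - (1 / real n) * (\<Sum>i<n. ?R i D E)"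
      unfolding g' g0 rows A1 A2 sum.distrib by (simp add: algebra_simps)
    have ex: "\<exists>i<n. E i \<noteq> 0 \<or> (\<exists>j<n. D i j \<noteq> 0)"
    proof (rule ccontr)
      assume "\<not> ?thesis"
      then have a: "\<forall>i<n. E i = 0" and b: "\<forall>i<n. \<forall>j<n. D i j = 0" by auto
      have "zQ' = zQ" using b Qc' zQc unfolding D_def by (intro eq_matI) auto
      moreover have "zS' = zS" using a Sc' zSc unfolding E_def by (intro eq_vecI) auto
      ultimately show False using ne by simp
    qed
    then obtain i0 where i0: "i0 < n" "E i0 \<noteq> 0 \<or> (\<exists>j<n. D i0 j \<noteq> 0)" by auto
    have "(\<Sum>i<n. ?R i D E) > 0"
    proof (rule sum_pos2[of "{..<n}" i0])
      show "0 < ?R i0 D E" using rowf_pos[OF i0(1), of D E] i0(2) by blast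
      show "\<And>i. i \<in> {..<n} \<Longrightarrow> 0 \<le> ?R i D E" using rowf_pos by blast
    qed (use i0 in auto)
    then show ?thesis unfolding diff using s_facts by simp
  qed
  have nsM: "nonsingular_M_matrix n IL"
    unfolding nonsingular_M_matrix_def
  proof (intro conjI exI[of _ 1] exI[of _ LL])
    show "IL \<in> carrier_mat n n" by (rule IL_carrier)
    show "LL \<in> carrier_mat n n" by (rule LL_carrier)
    show "\<forall>i<n. \<forall>j<n. 0 \<le> LL $$ (i, j)" using L_nonneg by auto
    show "IL = 1 \<cdot>\<^sub>m 1\<^sub>m n - LL" by (intro eq_matI) (auto simp: Lmat_def)
    show "spectral_radius (map_mat complex_of_real LL) < 1" by (rule spec_lt1)
  qed
  have tr: "(transpose_mat LL *\<^sub>v phi_vec c gam nu rho n) $ k < phi_vec c gam nu rho n $ k"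
    if k: "k < n" for k
  proof -
    have "(transpose_mat LL *\<^sub>v phi_vec c gam nu rho n) $ k
       = (\<Sum>j<n. LL $$ (j, k) * phi c gam nu rho n j)"
      using mat_vec_nth[of "transpose_mat LL" n n "phi_vec c gam nu rho n" k] k LL_carrier
      by (simp add: phi_vec_def)
    also have "\<dots> < phi c gam nu rho n k" by (rule L_col_less[OF k])
    finally show ?thesis using k by (simp add: phi_vec_def)
  qed
  show ?thesis
    using L_nonneg tr spec_lt1 nsM IL_invertible WW_nonneg W sumu feas opt by auto
qed

end

theorem mainTheorem8:
  fixes n :: nat and sigma :: real and c gam nu rho :: "nat \<Rightarrow> real"
  assumes n_pos: "n \<ge> 1" and sigma_pos: "sigma > 0"
    and c_pos: "\<forall>i<n. c i > 0" and gam_pos: "\<forall>i<n. gam i > 0"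
    and nu_pos: "\<forall>i<n. nu i > 0" and rho_bd: "\<forall>i<n. -1 < rho i \<and> rho i < 1"
  shows
    "let L = Lmat c gam nu rho n;
         ph = phi_vec c gam nu rho n;
         W = minv n (1\<^sub>m n - L);
         u = W *\<^sub>v Vvec c gam nu rho sigma n;
         v = W *\<^sub>v Uvec c gam nu rho sigma n;
         thstar = - (\<Sum>k<n. v $ k) / (\<Sum>k<n. u $ k);
         zS = thstar \<cdot>\<^sub>v u + v;
         mu = (\<lambda>j. 1 / (real n * Theta c gam nu n j) *
                 (1 - zeta c gam nu j - sigma / sqrt (real n) * aa c gam nu rho j * zS $ j));
         zQ = mat n n (\<lambda>(i, j). pp c gam nu i j *
                 (real n * mu j + (if i = j then 1 / c i else 0)
                  - gam i * sigma / sqrt (real n) * zS $ i * rho j * nu j))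
     in (\<forall>k<n. \<forall>j<n. L $$ (k, j) \<ge> 0)
      \<and> (\<forall>k<n. (transpose_mat L *\<^sub>v ph) $ k < ph $ k)
      \<and> spectral_radius (map_mat complex_of_real L) < 1
      \<and> nonsingular_M_matrix n (1\<^sub>m n - L)
      \<and> invertible_mat (1\<^sub>m n - L)
      \<and> (\<forall>k<n. \<forall>j<n. W $$ (k, j) \<ge> 0)
      \<and> (\<Sum>k<n. u $ k) \<noteq> 0
      \<and> feasible n zQ zS
      \<and> (\<forall>zQ' zS'. feasible n zQ' zS' \<and> (zQ', zS') \<noteq> (zQ, zS) \<longrightarrow>
            gobj c gam nu rho sigma n zQ' zS' < gobj c gam nu rho sigma n zQ zS)"
proof -
  interpret mfg n sigma c gam nu rho
    using assms by unfold_locales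
  show ?thesis unfolding Let_def
    by (rule main_loc[OF refl refl refl refl refl refl refl])
qed


end
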